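(* Let $G$ be a multiplicative monoid with identity, let $N$ be a $G$-graded near-ring, let $A$ be a totally ordered set and let $(P_a)_{a\in A}$ be a family of graded weakly prime ideals of $N$ such that $P_a\subseteq P_b$ whenever $a\le b$. Then $P=\bigcap_{a\in A}P_a$ is a graded weakly prime ideal of $N$.
   Context: A near-ring $(N,+,\cdot)$ is a set with two binary operations such that $(N,+)$ is a group (not necessarily abelian), $(N,\cdot)$ is a semigroup, and $(a+b)y = ay+by$ for all $a,b,y\in N$. For a multiplicative monoid $G$ with identity, $N$ is a $G$-graded near-ring if there is a family $\{N_\sigma\}_{\sigma\in G}$ of additive normal subgroups of $N$ with $N=\bigoplus_{\sigma\in G}N_\sigma$ and $N_\sigma N_\tau\subseteq N_{\sigma\tau}$. An ideal $P$ is graded if $P=\bigoplus_{\sigma}(P\cap N_\sigma)$. For ideals $I,J$, $IJ$ denotes their product. A graded ideal $P$ is graded weakly prime if for all graded ideals $I,J$ with $\{0\}\neq IJ\subseteq P$, either $I\subseteq P$ or $J\subseteq P$. *)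

theory Defs
  imports Main
begin

text \<open>A near-ring is modelled on a type whose addition is a (not necessarily
abelian) group (class group_add), whose multiplication is a semigroup
(class semigroup_mult), and which satisfies right distributivity.\<close>

definition near_ring :: "'n::{group_add, semigroup_mult} itself \<Rightarrow> bool" where
  "near_ring _ \<longleftrightarrow> (\<forall>a b y :: 'n. (a + b) * y = a * y + b * y)"

definition add_subgroup :: "'n::group_add set \<Rightarrow> bool" where
  "add_subgroup H \<longleftrightarrow> 0 \<in> H \<and> (\<forall>x\<in>H. \<forall>y\<in>H. x + y \<in> H) \<and> (\<forall>x\<in>H. - x \<in> H)"

definition normal_add_subgroup :: "'n::group_add set \<Rightarrow> bool" where
  "normal_add_subgroup H \<longleftrightarrow> add_subgroup H \<and> (\<forall>n. \<forall>h\<in>H. n + h - n \<in> H)"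

inductive_set gen_add :: "'n::group_add set \<Rightarrow> 'n set" for S where
  gen_base: "x \<in> S \<Longrightarrow> x \<in> gen_add S"
| gen_zero: "0 \<in> gen_add S"
| gen_plus: "x \<in> gen_add S \<Longrightarrow> y \<in> gen_add S \<Longrightarrow> x + y \<in> gen_add S"
| gen_uminus: "x \<in> gen_add S \<Longrightarrow> - x \<in> gen_add S"

definition internal_direct_sum :: "('g \<Rightarrow> 'n::group_add set) \<Rightarrow> bool" where
  "internal_direct_sum Ns \<longleftrightarrow>
     (\<forall>s. normal_add_subgroup (Ns s)) \<and>
     gen_add (\<Union>s. Ns s) = UNIV \<and>
     (\<forall>s. Ns s \<inter> gen_add (\<Union>t\<in>-{s}. Ns t) = {0})"

definition graded_near_ring ::
  "('g::monoid_mult \<Rightarrow> 'n::{group_add, semigroup_mult} set) \<Rightarrow> bool" where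
  "graded_near_ring Ns \<longleftrightarrow> near_ring TYPE('n) \<and> internal_direct_sum Ns \<and>
     (\<forall>s t. \<forall>x\<in>Ns s. \<forall>y\<in>Ns t. x * y \<in> Ns (s * t))"

text \<open>Ideal of a near-ring (Pilz): a normal subgroup I of (N,+) with
IN \<subseteq> I and n(n'+i) - nn' \<in> I.\<close>
definition nr_ideal :: "'n::{group_add, semigroup_mult} set \<Rightarrow> bool" where
  "nr_ideal I \<longleftrightarrow> normal_add_subgroup I \<and>
     (\<forall>i\<in>I. \<forall>n. i * n \<in> I) \<and>
     (\<forall>n n'. \<forall>i\<in>I. n * (n' + i) - n * n' \<in> I)"

definition graded_ideal ::
  "('g \<Rightarrow> 'n::{group_add, semigroup_mult} set) \<Rightarrow> 'n set \<Rightarrow> bool" where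
  "graded_ideal Ns P \<longleftrightarrow> nr_ideal P \<and> P = gen_add (\<Union>s. P \<inter> Ns s)"

definition ideal_prod :: "'n::semigroup_mult set \<Rightarrow> 'n set \<Rightarrow> 'n set" where
  "ideal_prod I J = {i * j | i j. i \<in> I \<and> j \<in> J}"

definition graded_weakly_prime ::
  "('g \<Rightarrow> 'n::{group_add, semigroup_mult} set) \<Rightarrow> 'n set \<Rightarrow> bool" where
  "graded_weakly_prime Ns P \<longleftrightarrow> graded_ideal Ns P \<and>
     (\<forall>I J. graded_ideal Ns I \<longrightarrow> graded_ideal Ns J \<longrightarrow>
        ideal_prod I J \<noteq> {0} \<longrightarrow> ideal_prod I J \<subseteq> P \<longrightarrow> I \<subseteq> P \<or> J \<subseteq> P)"

end

theory Submission
  imports Defs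
begin

lemma gen_mono: "A \<subseteq> B \<Longrightarrow> gen_add A \<subseteq> gen_add B"
proof
  fix x assume a: "A \<subseteq> B" and "x \<in> gen_add A"
  from this(2) a show "x \<in> gen_add B"
    by (induction x rule: gen_add.induct) (auto intro: gen_add.intros)
qed

lemma gen_sub: "add_subgroup Q \<Longrightarrow> A \<subseteq> Q \<Longrightarrow> gen_add A \<subseteq> Q"
proof
  fix x assume a: "add_subgroup Q" "A \<subseteq> Q" and "x \<in> gen_add A"
  from this(3) a show "x \<in> Q"
    by (induction x rule: gen_add.induct) (auto simp: add_subgroup_def)
qed

lemma gen_finite:
  assumes "x \<in> gen_add (\<Union>s. H s)"
  shows "\<exists>S. finite S \<and> x \<in> gen_add (\<Union>s\<in>S. H s)"
  using assms
proof (induction x rule: gen_add.induct)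
  case (gen_base x)
  then obtain s where "x \<in> H s" by auto
  then show ?case by (intro exI[of _ "{s}"]) (auto intro: gen_add.intros)
next
  case gen_zero
  then show ?case by (auto intro: gen_add.intros)
next
  case (gen_plus x y)
  then obtain S1 S2 where "finite S1" "x \<in> gen_add (\<Union>s\<in>S1. H s)"
    "finite S2" "y \<in> gen_add (\<Union>s\<in>S2. H s)" by blast
  moreover have "gen_add (\<Union>s\<in>S1. H s) \<subseteq> gen_add (\<Union>s\<in>S1 \<union> S2. H s)"
    "gen_add (\<Union>s\<in>S2. H s) \<subseteq> gen_add (\<Union>s\<in>S1 \<union> S2. H s)"
    by (auto intro!: gen_mono)
  ultimately show ?case
    by (intro exI[of _ "S1 \<union> S2"]) (auto intro: gen_add.intros)
next
  case (gen_uminus x)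
  then show ?case by (auto intro: gen_add.intros)
qed

lemma gen_empty: "x \<in> gen_add {} \<Longrightarrow> x = 0"
  by (induction x rule: gen_add.induct) auto

lemma gen_conj:
  assumes "\<forall>t\<in>T. \<forall>r\<in>H t. q + r - q \<in> H t"
    and "r \<in> gen_add (\<Union>t\<in>T. H t)"
  shows "q + r - q \<in> gen_add (\<Union>t\<in>T. H t)"
  using assms(2)
proof (induction r rule: gen_add.induct)
  case (gen_base x)
  then show ?case using assms(1) by (auto intro: gen_add.intros)
next
  case gen_zero
  then show ?case by (auto intro: gen_add.intros)
next
  case (gen_plus x y)
  have "q + (x + y) - q = (q + x - q) + (q + y - q)"
    by (simp only: diff_conv_add_uminus add.assoc minus_add minus_minus add_minus_cancel minus_add_cancel right_minus left_minus add_0_right add_0_left)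
  then show ?case using gen_plus by (auto intro: gen_add.intros)
next
  case (gen_uminus x)
  have "q + - x - q = - (q + x - q)"
    by (simp only: diff_conv_add_uminus add.assoc minus_add minus_minus add_minus_cancel minus_add_cancel right_minus left_minus add_0_right add_0_left)
  then show ?case using gen_uminus.IH by (metis gen_add.gen_uminus)
qed

lemma decomp:
  assumes sub: "\<And>t. add_subgroup (H t)"
    and cj: "\<And>q t r. q \<in> H s \<Longrightarrow> r \<in> H t \<Longrightarrow> q + r - q \<in> H t"
    and x: "x \<in> gen_add (\<Union>t\<in>T. H t)"
  shows "\<exists>q\<in>H s. - q + x \<in> gen_add (\<Union>t\<in>T-{s}. H t)"
  using x
proof (induction x rule: gen_add.induct)
  case (gen_base x)
  then obtain t where t: "t \<in> T" "x \<in> H t" by auto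
  show ?case
  proof (cases "t = s")
    case True
    then show ?thesis using t by (intro bexI[of _ x]) (auto intro: gen_add.intros)
  next
    case False
    then show ?thesis using t sub[of s] unfolding add_subgroup_def
      by (intro bexI[of _ 0]) (auto intro: gen_add.intros)
  qed
next
  case gen_zero
  then show ?case using sub[of s] unfolding add_subgroup_def
    by (intro bexI[of _ 0]) (auto intro: gen_add.intros)
next
  case (gen_plus x y)
  then obtain q1 q2 where q: "q1 \<in> H s" "-q1 + x \<in> gen_add (\<Union>t\<in>T-{s}. H t)"
    "q2 \<in> H s" "-q2 + y \<in> gen_add (\<Union>t\<in>T-{s}. H t)" by blast
  have mq2: "-q2 \<in> H s" using q sub[of s] unfolding add_subgroup_def by auto
  have c: "-q2 + (-q1 + x) - -q2 \<in> gen_add (\<Union>t\<in>T-{s}. H t)"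
    by (rule gen_conj[OF _ q(2)]) (intro ballI, erule cj[OF mq2])
  have "-(q1 + q2) + (x + y) = (-q2 + (-q1 + x) - -q2) + (-q2 + y)"
    by (simp only: diff_conv_add_uminus add.assoc minus_add minus_minus add_minus_cancel minus_add_cancel right_minus left_minus add_0_right add_0_left)
  then have "-(q1 + q2) + (x + y) \<in> gen_add (\<Union>t\<in>T-{s}. H t)"
    using c q by (auto intro: gen_add.intros)
  moreover have "q1 + q2 \<in> H s" using q sub[of s] unfolding add_subgroup_def by auto
  ultimately show ?case by blast
next
  case (gen_uminus x)
  then obtain q where q: "q \<in> H s" "-q + x \<in> gen_add (\<Union>t\<in>T-{s}. H t)" by blast
  have r: "- (-q + x) \<in> gen_add (\<Union>t\<in>T-{s}. H t)" using q by (auto intro: gen_add.intros)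
  have c: "q + - (-q + x) - q \<in> gen_add (\<Union>t\<in>T-{s}. H t)"
    by (rule gen_conj[OF _ r]) (intro ballI, erule cj[OF q(1)])
  have "- (-q) + - x = q + - (-q + x) - q"
    by (simp only: diff_conv_add_uminus add.assoc minus_add minus_minus add_minus_cancel minus_add_cancel right_minus left_minus add_0_right add_0_left)
  moreover have "-q \<in> H s" using q sub[of s] unfolding add_subgroup_def by auto
  ultimately show ?case using c by metis
qed

lemma uniq:
  assumes ids: "internal_direct_sum Ns"
    and "q1 \<in> Ns s" "q2 \<in> Ns s"
    and "- q1 + x \<in> gen_add (\<Union>t\<in>-{s}. Ns t)"
    and "- q2 + x \<in> gen_add (\<Union>t\<in>-{s}. Ns t)"
  shows "q1 = q2"
proof -
  have "(- q1 + x) + - (- q2 + x) \<in> gen_add (\<Union>t\<in>-{s}. Ns t)"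
    using assms(4,5) by (rule gen_add.gen_plus[OF _ gen_add.gen_uminus])
  moreover have "(- q1 + x) + - (- q2 + x) = - q1 + q2"
    by (simp only: diff_conv_add_uminus add.assoc minus_add minus_minus add_minus_cancel minus_add_cancel right_minus left_minus add_0_right add_0_left)
  moreover have "add_subgroup (Ns s)" using ids
    unfolding internal_direct_sum_def normal_add_subgroup_def by blast
  then have "- q1 + q2 \<in> Ns s" using assms(2,3)
    unfolding add_subgroup_def by blast
  ultimately have "- q1 + q2 \<in> Ns s \<inter> gen_add (\<Union>t\<in>-{s}. Ns t)" by simp
  moreover have "Ns s \<inter> gen_add (\<Union>t\<in>-{s}. Ns t) = {0}" using ids unfolding internal_direct_sum_def by blast
  ultimately have "- q1 + q2 = 0" by blast
  then show ?thesis by (metis add_minus_cancel add.right_neutral)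
qed


lemma ids_sub:
  assumes "internal_direct_sum Ns"
  shows "add_subgroup (Ns t)" "\<And>n h. h \<in> Ns t \<Longrightarrow> n + h - n \<in> Ns t"
  using assms unfolding internal_direct_sum_def normal_add_subgroup_def by blast+

lemma assemble:
  assumes ids: "internal_direct_sum Ns" and fin: "finite S" and Q0: "0 \<in> Q"
  shows "x \<in> gen_add (\<Union>t\<in>S. Ns t) \<Longrightarrow>
    (\<forall>s. \<exists>q\<in>Q \<inter> Ns s. - q + x \<in> gen_add (\<Union>t\<in>-{s}. Ns t)) \<Longrightarrow>
    x \<in> gen_add (\<Union>t\<in>S. Q \<inter> Ns t)"
  using fin
proof (induction S arbitrary: x rule: finite_induct)
  case empty
  then have "x = 0" using gen_empty by simp
  then show ?case by (simp add: gen_add.gen_zero)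
next
  case (insert s S x)
  obtain q' where q': "q' \<in> Ns s" "- q' + x \<in> gen_add (\<Union>t\<in>insert s S - {s}. Ns t)"
    using decomp[of Ns s x "insert s S"] ids_sub[OF ids] insert.prems(1) by blast
  have e: "insert s S - {s} = S" using insert.hyps(2) by auto
  have r1: "- q' + x \<in> gen_add (\<Union>t\<in>S. Ns t)" using q'(2) e by simp
  have "gen_add (\<Union>t\<in>S. Ns t) \<subseteq> gen_add (\<Union>t\<in>-{s}. Ns t)"
    using insert.hyps(2) by (intro gen_mono) auto
  then have r2: "- q' + x \<in> gen_add (\<Union>t\<in>-{s}. Ns t)" using r1 by blast
  obtain q where q: "q \<in> Q" "q \<in> Ns s" "- q + x \<in> gen_add (\<Union>t\<in>-{s}. Ns t)"
    using insert.prems(2) by blast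
  have qq: "q' = q" using uniq[OF ids q'(1) q(2) r2 q(3)] .
  define r where "r = - q + x"
  have rS: "r \<in> gen_add (\<Union>t\<in>S. Ns t)" using r1 qq r_def by simp
  have "\<forall>s'. \<exists>q2\<in>Q \<inter> Ns s'. - q2 + r \<in> gen_add (\<Union>t\<in>-{s'}. Ns t)"
  proof
    fix s'
    show "\<exists>q2\<in>Q \<inter> Ns s'. - q2 + r \<in> gen_add (\<Union>t\<in>-{s'}. Ns t)"
    proof (cases "s' = s")
      case True
      have "0 \<in> Ns s'" using ids_sub(1)[OF ids, of s'] unfolding add_subgroup_def by blast
      then show ?thesis using True Q0 q(3) r_def by (intro bexI[of _ 0]) auto
    next
      case False
      obtain q2 where q2: "q2 \<in> Q" "q2 \<in> Ns s'" "- q2 + x \<in> gen_add (\<Union>t\<in>-{s'}. Ns t)"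
        using insert.prems(2) by blast
      have mq: "- q \<in> Ns s" using q(2) ids_sub(1)[OF ids, of s] unfolding add_subgroup_def by blast
      have "- q2 + - q - - q2 \<in> Ns s" using ids_sub(2)[OF ids mq] .
      then have c: "- q2 + - q - - q2 \<in> gen_add (\<Union>t\<in>-{s'}. Ns t)"
        using False by (intro gen_add.gen_base) auto
      have "- q2 + r = (- q2 + - q - - q2) + (- q2 + x)" unfolding r_def
        by (simp only: diff_conv_add_uminus add.assoc minus_add minus_minus add_minus_cancel minus_add_cancel right_minus left_minus add_0_right add_0_left)
      then have "- q2 + r \<in> gen_add (\<Union>t\<in>-{s'}. Ns t)"
        using c q2(3) by (metis gen_add.gen_plus)
      then show ?thesis using q2 by blast
    qed
  qed
  then have rQ: "r \<in> gen_add (\<Union>t\<in>S. Q \<inter> Ns t)" using insert.IH rS by blast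
  have "gen_add (\<Union>t\<in>S. Q \<inter> Ns t) \<subseteq> gen_add (\<Union>t\<in>insert s S. Q \<inter> Ns t)"
    by (intro gen_mono) auto
  then have rQ': "r \<in> gen_add (\<Union>t\<in>insert s S. Q \<inter> Ns t)" using rQ by blast
  have qQ: "q \<in> gen_add (\<Union>t\<in>insert s S. Q \<inter> Ns t)" using q by (intro gen_add.gen_base) auto
  have "x = q + r" unfolding r_def by (simp only: add_minus_cancel)
  then show ?case using qQ rQ' by (metis gen_add.gen_plus)
qed


lemma inter_ideal:
  assumes "\<And>a. a \<in> A \<Longrightarrow> nr_ideal (P a)"
  shows "nr_ideal (\<Inter>a\<in>A. P a)"
proof -
  have h: "\<And>a. a \<in> A \<Longrightarrow> 0 \<in> P a \<and> (\<forall>x\<in>P a. \<forall>y\<in>P a. x + y \<in> P a) \<and> (\<forall>x\<in>P a. - x \<in> P a)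
     \<and> (\<forall>n. \<forall>h\<in>P a. n + h - n \<in> P a) \<and> (\<forall>i\<in>P a. \<forall>n. i * n \<in> P a) \<and>
     (\<forall>n n'. \<forall>i\<in>P a. n * (n' + i) - n * n' \<in> P a)"
    using assms unfolding nr_ideal_def normal_add_subgroup_def add_subgroup_def by simp
  have "0 \<in> (\<Inter>a\<in>A. P a)" using h by simp
  moreover have "\<forall>x\<in>(\<Inter>a\<in>A. P a). \<forall>y\<in>(\<Inter>a\<in>A. P a). x + y \<in> (\<Inter>a\<in>A. P a)" using h by simp
  moreover have "\<forall>x\<in>(\<Inter>a\<in>A. P a). - x \<in> (\<Inter>a\<in>A. P a)" using h by simp
  moreover have "\<forall>n. \<forall>x\<in>(\<Inter>a\<in>A. P a). n + x - n \<in> (\<Inter>a\<in>A. P a)" using h by simp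
  moreover have "\<forall>x\<in>(\<Inter>a\<in>A. P a). \<forall>n. x * n \<in> (\<Inter>a\<in>A. P a)" using h by simp
  moreover have "\<forall>n n'. \<forall>x\<in>(\<Inter>a\<in>A. P a). n * (n' + x) - n * n' \<in> (\<Inter>a\<in>A. P a)" using h by simp
  ultimately show ?thesis unfolding nr_ideal_def normal_add_subgroup_def add_subgroup_def by blast
qed

theorem proposition3:
  fixes Ns :: "'g::monoid_mult \<Rightarrow> 'n::{group_add, semigroup_mult} set"
    and A :: "'a::linorder set"
    and P :: "'a \<Rightarrow> 'n set"
  assumes "graded_near_ring Ns"
    and "\<And>a. a \<in> A \<Longrightarrow> graded_weakly_prime Ns (P a)"
    and "\<And>a b. a \<in> A \<Longrightarrow> b \<in> A \<Longrightarrow> a \<le> b \<Longrightarrow> P a \<subseteq> P b"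
  shows "graded_weakly_prime Ns (\<Inter>a\<in>A. P a)"
proof -
  define PP where "PP = (\<Inter>a\<in>A. P a)"
  have ids: "internal_direct_sum Ns" using assms(1) unfolding graded_near_ring_def by blast
  have gi: "\<And>a. a \<in> A \<Longrightarrow> graded_ideal Ns (P a)"
    using assms(2) unfolding graded_weakly_prime_def by blast
  have ni: "\<And>a. a \<in> A \<Longrightarrow> nr_ideal (P a)" using gi unfolding graded_ideal_def by blast
  have sa: "\<And>a. a \<in> A \<Longrightarrow> add_subgroup (P a)" using ni
    unfolding nr_ideal_def normal_add_subgroup_def by blast
  have niP: "nr_ideal PP" unfolding PP_def by (rule inter_ideal[OF ni])
  then have sP: "add_subgroup PP" unfolding nr_ideal_def normal_add_subgroup_def by blast
  have "PP \<subseteq> gen_add (\<Union>s. PP \<inter> Ns s)"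
  proof
    fix x assume xP: "x \<in> PP"
    have "gen_add (\<Union>s. Ns s) = UNIV" using ids unfolding internal_direct_sum_def by (elim conjE)
    then have xall: "x \<in> gen_add (\<Union>s. Ns s)" by simp
    then obtain S where S: "finite S" "x \<in> gen_add (\<Union>s\<in>S. Ns s)"
      using gen_finite by blast
    have "\<forall>s. \<exists>q\<in>PP \<inter> Ns s. - q + x \<in> gen_add (\<Union>t\<in>-{s}. Ns t)"
    proof
      fix s
      obtain q0 where q0: "q0 \<in> Ns s" "- q0 + x \<in> gen_add (\<Union>t\<in>UNIV-{s}. Ns t)"
        using decomp[of Ns s x UNIV, OF ids_sub(1)[OF ids] ids_sub(2)[OF ids] xall] by blast
      have U: "UNIV - {s} = -{s}" by auto
      have q0': "- q0 + x \<in> gen_add (\<Union>t\<in>-{s}. Ns t)" using q0(2) unfolding U .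
      have "q0 \<in> P a" if a: "a \<in> A" for a
      proof -
        have eq: "P a = gen_add (\<Union>t. P a \<inter> Ns t)" using gi[OF a] unfolding graded_ideal_def by (rule conjunct2)
        have xPa: "x \<in> P a" using xP unfolding PP_def by (rule INT_D[OF _ a])
        have xa: "x \<in> gen_add (\<Union>t\<in>UNIV. P a \<inter> Ns t)"
          using xPa eq by (rule back_subst)
        have sa': "0 \<in> P a" "\<And>x y. x \<in> P a \<Longrightarrow> y \<in> P a \<Longrightarrow> x + y \<in> P a"
          "\<And>x. x \<in> P a \<Longrightarrow> - x \<in> P a"
          using sa[OF a] unfolding add_subgroup_def by blast+
        have sn: "0 \<in> Ns t" "\<And>x y. x \<in> Ns t \<Longrightarrow> y \<in> Ns t \<Longrightarrow> x + y \<in> Ns t"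
          "\<And>x. x \<in> Ns t \<Longrightarrow> - x \<in> Ns t" for t
          using ids_sub(1)[OF ids, of t] unfolding add_subgroup_def by blast+
        have sub: "add_subgroup (P a \<inter> Ns t)" for t
          unfolding add_subgroup_def using sa' sn by blast
        have cj: "q + r - q \<in> P a \<inter> Ns t" if qr: "q \<in> P a \<inter> Ns s" "r \<in> P a \<inter> Ns t" for q t r
        proof (rule IntI)
          have e: "q + r - q = q + r + - q" by (simp only: diff_conv_add_uminus)
          have "q + r + - q \<in> P a" using qr by (intro sa'(2) sa'(3)) auto
          then show "q + r - q \<in> P a" unfolding e .
          show "q + r - q \<in> Ns t" using qr(2) by (intro ids_sub(2)[OF ids]) auto
        qed
        obtain qa where qa: "qa \<in> P a \<inter> Ns s" "- qa + x \<in> gen_add (\<Union>t\<in>UNIV-{s}. P a \<inter> Ns t)"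
          using decomp[of "\<lambda>t. P a \<inter> Ns t" s x UNIV, OF sub cj xa] by blast
        have "gen_add (\<Union>t\<in>UNIV-{s}. P a \<inter> Ns t) \<subseteq> gen_add (\<Union>t\<in>-{s}. Ns t)"
          by (intro gen_mono) auto
        then have "- qa + x \<in> gen_add (\<Union>t\<in>-{s}. Ns t)" using qa(2) by blast
        then have "qa = q0" using uniq[OF ids _ q0(1) _ q0'] qa(1) by blast
        then show ?thesis using qa(1) by blast
      qed
      then have "q0 \<in> PP \<inter> Ns s" using q0(1) unfolding PP_def by blast
      then show "\<exists>q\<in>PP \<inter> Ns s. - q + x \<in> gen_add (\<Union>t\<in>-{s}. Ns t)" using q0' by blast
    qed
    moreover have "0 \<in> PP" using sP unfolding add_subgroup_def by blast
    ultimately have "x \<in> gen_add (\<Union>t\<in>S. PP \<inter> Ns t)"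
      using assemble[OF ids S(1), of PP x] S(2) by blast
    moreover have "gen_add (\<Union>t\<in>S. PP \<inter> Ns t) \<subseteq> gen_add (\<Union>s. PP \<inter> Ns s)"
      by (intro gen_mono) auto
    ultimately show "x \<in> gen_add (\<Union>s. PP \<inter> Ns s)" by blast
  qed
  moreover have "gen_add (\<Union>s. PP \<inter> Ns s) \<subseteq> PP"
    by (rule gen_sub[OF sP]) blast
  ultimately have gP: "graded_ideal Ns PP" using niP unfolding graded_ideal_def by blast
  have "I \<subseteq> PP \<or> J \<subseteq> PP"
    if I: "graded_ideal Ns I" and J: "graded_ideal Ns J" and ne: "ideal_prod I J \<noteq> {0}"
      and sub: "ideal_prod I J \<subseteq> PP" for I J
  proof (rule ccontr)
    assume "\<not> (I \<subseteq> PP \<or> J \<subseteq> PP)"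
    then obtain a b where a: "a \<in> A" "\<not> I \<subseteq> P a" and b: "b \<in> A" "\<not> J \<subseteq> P b"
      unfolding PP_def by blast
    define c where "c = min a b"
    have c: "c \<in> A" "c \<le> a" "c \<le> b" using a b unfolding c_def by (auto simp: min_def)
    have "ideal_prod I J \<subseteq> P c" using sub c(1) unfolding PP_def by blast
    then have "I \<subseteq> P c \<or> J \<subseteq> P c"
      using assms(2)[OF c(1)] I J ne unfolding graded_weakly_prime_def by blast
    then show False
      using assms(3)[OF c(1) a(1) c(2)] assms(3)[OF c(1) b(1) c(3)] a b by blast
  qed
  then show ?thesis using gP unfolding graded_weakly_prime_def PP_def by blast
qed

end
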